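(* Let $G$ be a finite group, let $m$ be the number of irreducible $\mathbb{R}$-characters of $G$, and let $V\in\mathbb{R}^{m\times m}$ be the real character table of $G$ (as defined in the context), with first row the trivial character. Then the polyhedron $$S(G)=\{x\in\mathbb{R}^m \mid xV\ge 0 \text{ (entrywise)},\ x_1=1\}$$ is a simplex of dimension $m-1$. If $G\neq 1$, then the point $e_1=(1,0,\dots,0)$ lies in the interior of $S(G)$ (relative to the affine hyperplane $x_1=1$).
   Context: Let $X\in\mathbb{C}^{n\times n}$ be the complex character table of $G$: rows indexed by the $n$ irreducible complex characters, columns by the $n$ conjugacy classes. Complex conjugation acts on the rows and on the columns of $X$. Summing the rows in each orbit of complex conjugation yields a real matrix $U\in\mathbb{R}^{m\times n}$, $m$ the number of orbits (the rows of $U$ are the irreducible $\mathbb{R}$-characters). Omitting duplicate columns of $U$ (one column per orbit of conjugacy classes under $g\mapsto g^{-1}$; there are $m$ such orbits) gives the square matrix $V\in\mathbb{R}^{m\times m}$, the real character table. The trivial character is taken to be the first row, so the first row of $V$ is the all-ones vector. A vector $x\in\mathbb{Z}^m$ encodes the virtual character $\sum_i x_i\rho_i$, where $\rho_i$ are the irreducible $\mathbb{R}$-characters; the lattice points of $S(G)$ correspond bijectively to the $S$-characters of $G$ (real virtual characters with $[\psi,1_G]=1$ and all values non-negative real). *)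

theory Defs
  imports "HOL-Algebra.Group" "Jordan_Normal_Form.Matrix" "HOL-Analysis.Analysis"
begin

definition cplx_rep :: "('a, 'b) monoid_scheme \<Rightarrow> nat \<Rightarrow> ('a \<Rightarrow> complex Matrix.mat) \<Rightarrow> bool" where
  "cplx_rep G d \<rho> \<longleftrightarrow> 0 < d \<and>
     (\<forall>g\<in>carrier G. \<rho> g \<in> carrier_mat d d) \<and>
     \<rho> \<one>\<^bsub>G\<^esub> = 1\<^sub>m d \<and>
     (\<forall>g\<in>carrier G. \<forall>h\<in>carrier G. \<rho> (g \<otimes>\<^bsub>G\<^esub> h) = \<rho> g * \<rho> h)"

definition invariant_subspace :: "('a, 'b) monoid_scheme \<Rightarrow> nat \<Rightarrow> ('a \<Rightarrow> complex Matrix.mat) \<Rightarrow> complex Matrix.vec set \<Rightarrow> bool" where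
  "invariant_subspace G d \<rho> W \<longleftrightarrow> W \<subseteq> carrier_vec d \<and> 0\<^sub>v d \<in> W \<and>
     (\<forall>v\<in>W. \<forall>w\<in>W. v + w \<in> W) \<and>
     (\<forall>c::complex. \<forall>v\<in>W. c \<cdot>\<^sub>v v \<in> W) \<and>
     (\<forall>g\<in>carrier G. \<forall>v\<in>W. \<rho> g *\<^sub>v v \<in> W)"

definition irreducible_rep :: "('a, 'b) monoid_scheme \<Rightarrow> nat \<Rightarrow> ('a \<Rightarrow> complex Matrix.mat) \<Rightarrow> bool" where
  "irreducible_rep G d \<rho> \<longleftrightarrow> cplx_rep G d \<rho> \<and>
     (\<forall>W. invariant_subspace G d \<rho> W \<longrightarrow> W = {0\<^sub>v d} \<or> W = carrier_vec d)"

definition character_of :: "('a, 'b) monoid_scheme \<Rightarrow> ('a \<Rightarrow> complex Matrix.mat) \<Rightarrow> 'a \<Rightarrow> complex" where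
  "character_of G \<rho> = (\<lambda>g. if g \<in> carrier G then (\<Sum>i<dim_row (\<rho> g). \<rho> g $$ (i, i)) else 0)"

definition irr_chars :: "('a, 'b) monoid_scheme \<Rightarrow> ('a \<Rightarrow> complex) set" where
  "irr_chars G = {chi. \<exists>d \<rho>. irreducible_rep G d \<rho> \<and> chi = character_of G \<rho>}"

section \<open>Irreducible R-characters: sums over orbits of complex conjugation\<close>

definition real_irr_chars :: "('a, 'b) monoid_scheme \<Rightarrow> ('a \<Rightarrow> complex) set" where
  "real_irr_chars G = (\<lambda>chi. if (cnj \<circ> chi) = chi then chi else (\<lambda>g. chi g + cnj (chi g))) ` irr_chars G"

definition trivial_char :: "('a, 'b) monoid_scheme \<Rightarrow> 'a \<Rightarrow> complex" where
  "trivial_char G = (\<lambda>g. if g \<in> carrier G then 1 else 0)"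

definition conj_or_inv_conj :: "('a, 'b) monoid_scheme \<Rightarrow> 'a \<Rightarrow> 'a \<Rightarrow> bool" where
  "conj_or_inv_conj G g h \<longleftrightarrow> (\<exists>x\<in>carrier G.
      h = x \<otimes>\<^bsub>G\<^esub> g \<otimes>\<^bsub>G\<^esub> inv\<^bsub>G\<^esub> x \<or>
      h = x \<otimes>\<^bsub>G\<^esub> inv\<^bsub>G\<^esub> g \<otimes>\<^bsub>G\<^esub> inv\<^bsub>G\<^esub> x)"

text \<open>V is a real character table of G with respect to an enumeration psi of the irreducible
  R-characters (rows, psi i0 trivial) and a system c of representatives of the orbits of
  conjugacy classes under inversion (columns), both indexed by the finite type 'n.\<close>
definition is_real_char_table ::
  "('a, 'b) monoid_scheme \<Rightarrow> ('n::finite \<Rightarrow> 'a \<Rightarrow> complex) \<Rightarrow> ('n \<Rightarrow> 'a) \<Rightarrow> 'n \<Rightarrow> real^'n^'n \<Rightarrow> bool" where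
  "is_real_char_table G \<psi> c i0 V \<longleftrightarrow>
     bij_betw \<psi> UNIV (real_irr_chars G) \<and>
     \<psi> i0 = trivial_char G \<and>
     (\<forall>j. c j \<in> carrier G) \<and>
     (\<forall>g\<in>carrier G. \<exists>!j. conj_or_inv_conj G (c j) g) \<and>
     (\<forall>i j. V $ i $ j = Re (\<psi> i (c j)))"

definition S_polyhedron :: "real^'n^'n \<Rightarrow> 'n::finite \<Rightarrow> (real^'n) set" where
  "S_polyhedron V i0 = {x. (\<forall>j. 0 \<le> (x v* V) $ j) \<and> x $ i0 = 1}"

end

theory Submission
  imports Defs "Jordan_Normal_Form.Schur_Decomposition" "HOL-Algebra.Multiplicative_Group"
begin

definition tr :: "complex Matrix.mat \<Rightarrow> complex" where
  "tr A = (\<Sum>i<dim_row A. A $$ (i,i))"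

lemma mult_entry:
  assumes "A \<in> carrier_mat n m" "B \<in> carrier_mat m p" "i < n" "j < p"
  shows "(A * B) $$ (i,j) = (\<Sum>k<m. A $$ (i,k) * B $$ (k,j))"
  using assms by (auto simp: scalar_prod_def lessThan_atLeast0 intro!: sum.cong)

lemma mult_vec_entry:
  assumes "A \<in> carrier_mat n m" "v \<in> carrier_vec m" "i < n"
  shows "(A *\<^sub>v v) $ i = (\<Sum>k<m. A $$ (i,k) * v $ k)"
  using assms by (auto simp: scalar_prod_def lessThan_atLeast0 intro!: sum.cong)

lemma tr_comm:
  assumes A: "A \<in> carrier_mat n m" and B: "B \<in> carrier_mat m n"
  shows "tr (A*B) = tr (B*A)"
proof -
  have "tr (A*B) = (\<Sum>i<n. \<Sum>k<m. A$$(i,k)*B$$(k,i))"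
    unfolding tr_def using A B mult_entry[OF A B] by (auto intro!: sum.cong simp del: index_mult_mat(1))
  also have "\<dots> = (\<Sum>k<m. \<Sum>i<n. B$$(k,i)*A$$(i,k))"
    by (subst sum.swap) (simp add: mult.commute)
  also have "\<dots> = tr (B*A)"
    unfolding tr_def using A B mult_entry[OF B A] by (auto intro!: sum.cong simp del: index_mult_mat(1))
  finally show ?thesis .
qed

lemma ut_mult:
  assumes A: "A \<in> carrier_mat n n" and B: "B \<in> carrier_mat n n"
    and uA: "upper_triangular A" and uB: "upper_triangular B"
  shows "upper_triangular (A*B) \<and> (\<forall>i<n. (A*B)$$(i,i) = A$$(i,i)*B$$(i,i))"
proof
  show "upper_triangular (A*B)"
  proof (rule upper_triangularI)
    fix i j assume ji: "j < i" and i: "i < dim_row (A*B)"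
    hence i': "i < n" using A by simp
    have "(A*B)$$(i,j) = (\<Sum>k<n. A $$ (i,k) * B $$ (k,j))"
      using mult_entry[OF A B i'] ji i' by simp
    also have "\<dots> = 0"
    proof (rule sum.neutral, intro ballI)
      fix k assume k: "k \<in> {..<n}"
      show "A $$ (i,k) * B $$ (k,j) = 0"
      proof (cases "k < i")
        case True thus ?thesis using upper_triangularD[OF uA True] i' A by simp
      next
        case False hence "j < k" using ji by simp
        thus ?thesis using upper_triangularD[OF uB \<open>j<k\<close>] k B by simp
      qed
    qed
    finally show "(A*B)$$(i,j) = 0" .
  qed
  show "\<forall>i<n. (A*B)$$(i,i) = A$$(i,i)*B$$(i,i)"
  proof (intro allI impI)
    fix i assume i: "i < n"
    have "(A*B)$$(i,i) = (\<Sum>k<n. A $$ (i,k) * B $$ (k,i))"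
      using mult_entry[OF A B i i] .
    also have "\<dots> = (\<Sum>k<n. if k = i then A$$(i,i)*B$$(i,i) else 0)"
    proof (rule sum.cong[OF refl])
      fix k assume k: "k \<in> {..<n}"
      show "A $$ (i,k) * B $$ (k,i) = (if k = i then A$$(i,i)*B$$(i,i) else 0)"
      proof (cases "k < i")
        case True thus ?thesis using upper_triangularD[OF uA True] i A by simp
      next
        case False
        show ?thesis
        proof (cases "k = i")
          case False
          hence "i < k" using \<open>\<not> k < i\<close> by simp
          thus ?thesis using upper_triangularD[OF uB \<open>i<k\<close>] k B by simp
        qed simp
      qed
    qed
    also have "\<dots> = A$$(i,i)*B$$(i,i)" using i by simp
    finally show "(A*B)$$(i,i) = A$$(i,i)*B$$(i,i)" .
  qed
qed

lemma ut_pow: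
  assumes B: "B \<in> carrier_mat n n" and uB: "upper_triangular B"
  shows "upper_triangular (B ^\<^sub>m k) \<and> (\<forall>i<n. (B ^\<^sub>m k)$$(i,i) = B$$(i,i)^k)"
proof (induction k)
  case 0 thus ?case using B by auto
next
  case (Suc k)
  have Bk: "B ^\<^sub>m k \<in> carrier_mat n n" using B by simp
  from ut_mult[OF Bk B] Suc uB have "upper_triangular (B ^\<^sub>m Suc k)"
    and "\<forall>i<n. (B ^\<^sub>m Suc k)$$(i,i) = B$$(i,i)^k * B$$(i,i)" by auto
  thus ?case by (simp del: power_Suc add: power_Suc2)
qed

lemma root_unity_cnj:
  fixes z :: complex
  assumes z: "z^k = 1" and k: "k \<ge> 1"
  shows "z^(k-1) = cnj z"
proof -
  have "norm z ^ k = 1" using z by (metis norm_one norm_power)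
  hence n1: "norm z = 1" using k
    by (metis norm_ge_zero one_power2 power_eq_iff_eq_base power_one zero_less_one le_less_trans less_numeral_extra(1) zero_le_one
        not_one_le_zero less_le_trans linorder_not_le nat_le_linear power_eq_imp_eq_base)
  have z0: "z \<noteq> 0" using n1 by auto
  have "z * cnj z = 1" using n1 complex_norm_square[of z] by simp
  moreover have "z * z^(k-1) = 1" using z k by (metis One_nat_def Suc_diff_le diff_Suc_1 power_Suc)
  ultimately show ?thesis using z0 by (metis mult_left_cancel)
qed

lemma tr_pow_pred:
  assumes A: "A \<in> carrier_mat n n" and k: "k \<ge> 1" and Ak: "A ^\<^sub>m k = 1\<^sub>m n"
  shows "tr (A ^\<^sub>m (k-1)) = cnj (tr A)"
proof -
  obtain es where cp: "char_poly A = (\<Prod>a\<leftarrow>es. [:-a,1:])" using char_poly_factorized[OF A] by auto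
  obtain B P Q where sch: "schur_decomposition A es = (B,P,Q)" by (cases "schur_decomposition A es") auto
  from schur_decomposition[OF A cp sch] have wit: "similar_mat_wit A B P Q" and ut: "upper_triangular B" by auto
  note W = similar_mat_witD2[OF A wit]
  have B: "B \<in> carrier_mat n n" and P: "P \<in> carrier_mat n n" and Q: "Q \<in> carrier_mat n n"
    and PQ: "P * Q = 1\<^sub>m n" and QP: "Q * P = 1\<^sub>m n" using W by auto
  have trsim: "tr (A ^\<^sub>m j) = tr (B ^\<^sub>m j)" for j
  proof -
    have Bj: "B ^\<^sub>m j \<in> carrier_mat n n" using B by simp
    have "tr (A ^\<^sub>m j) = tr ((P * B ^\<^sub>m j) * Q)" using similar_mat_wit_pow_id[OF wit] by simp
    also have "\<dots> = tr (Q * (P * B ^\<^sub>m j))" by (rule tr_comm[of _ n n]) (use P Q Bj in auto)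
    also have "Q * (P * B ^\<^sub>m j) = (Q * P) * B ^\<^sub>m j" using P Q Bj by simp
    also have "\<dots> = B ^\<^sub>m j" using QP left_mult_one_mat[OF Bj] by simp
    finally show ?thesis .
  qed
  define Bk where "Bk = B ^\<^sub>m k"
  have Bkc: "Bk \<in> carrier_mat n n" using B Bk_def by simp
  have "B ^\<^sub>m k = (Q * P) * Bk * (Q * P)" using QP left_mult_one_mat[OF Bkc] right_mult_one_mat[OF Bkc] Bk_def by simp
  also have "\<dots> = Q * (P * Bk) * (Q * P)" using assoc_mult_mat[OF Q P Bkc] by simp
  also have "\<dots> = Q * ((P * Bk) * (Q * P))" using assoc_mult_mat[of Q n n "P*Bk" n "Q*P" n] P Q Bkc by simp
  also have "(P * Bk) * (Q * P) = ((P * Bk) * Q) * P" using assoc_mult_mat[of "P*Bk" n n Q n P n] P Q Bkc by simp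
  also have "Q * (((P * Bk) * Q) * P) = (Q * ((P * Bk) * Q)) * P" using assoc_mult_mat[of Q n n "P*Bk*Q" n P n] P Q Bkc by simp
  also have "P * Bk * Q = 1\<^sub>m n" using similar_mat_wit_pow_id[OF wit, of k] Ak Bk_def by simp
  also have "Q * 1\<^sub>m n * P = 1\<^sub>m n" using Q P QP by simp
  finally have Bk: "B ^\<^sub>m k = 1\<^sub>m n" .
  note up = ut_pow[OF B ut]
  have diag1: "B$$(i,i)^k = 1" if "i < n" for i using up[of k] Bk that by auto
  have "tr (A ^\<^sub>m (k-1)) = tr (B ^\<^sub>m (k-1))" by (rule trsim)
  also have "\<dots> = (\<Sum>i<n. B$$(i,i)^(k-1))" unfolding tr_def using up B by simp
  also have "\<dots> = (\<Sum>i<n. cnj (B$$(i,i)))" using diag1 root_unity_cnj k by simp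
  also have "\<dots> = cnj (tr (B ^\<^sub>m 1))" unfolding tr_def using up[of 1] B by simp
  also have "\<dots> = cnj (tr A)" using trsim[of 1] A by simp
  finally show ?thesis .
qed


section \<open>Representations\<close>

lemma rep_carrier: "cplx_rep G d \<rho> \<Longrightarrow> g \<in> carrier G \<Longrightarrow> \<rho> g \<in> carrier_mat d d"
  unfolding cplx_rep_def by auto

lemma rep_mult: "cplx_rep G d \<rho> \<Longrightarrow> g \<in> carrier G \<Longrightarrow> h \<in> carrier G \<Longrightarrow> \<rho> (g \<otimes>\<^bsub>G\<^esub> h) = \<rho> g * \<rho> h"
  unfolding cplx_rep_def by auto

lemma rep_one: "cplx_rep G d \<rho> \<Longrightarrow> \<rho> \<one>\<^bsub>G\<^esub> = 1\<^sub>m d"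
  unfolding cplx_rep_def by auto

context group begin

lemma rep_inv:
  assumes "cplx_rep G d \<rho>" "g \<in> carrier G"
  shows "\<rho> (inv g) * \<rho> g = 1\<^sub>m d" "\<rho> g * \<rho> (inv g) = 1\<^sub>m d"
proof -
  show "\<rho> (inv g) * \<rho> g = 1\<^sub>m d"
    using rep_mult[OF assms(1), of "inv g" g] rep_one[OF assms(1)] assms(2) by simp
  show "\<rho> g * \<rho> (inv g) = 1\<^sub>m d"
    using rep_mult[OF assms(1), of g "inv g"] rep_one[OF assms(1)] assms(2) by simp
qed

lemma rep_pow:
  assumes "cplx_rep G d \<rho>" "g \<in> carrier G"
  shows "\<rho> (g [^] (k::nat)) = \<rho> g ^\<^sub>m k"
proof (induction k)
  case 0
  show ?case using rep_one[OF assms(1)] rep_carrier[OF assms(1,2)] by simp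
next
  case (Suc k)
  show ?case using rep_mult[OF assms(1), of "g [^] k" g] assms(2) Suc by simp
qed

end

lemma char_eq: "cplx_rep G d \<rho> \<Longrightarrow> g \<in> carrier G \<Longrightarrow> character_of G \<rho> g = tr (\<rho> g)"
  unfolding character_of_def tr_def using rep_carrier by fastforce

lemma char_out: "g \<notin> carrier G \<Longrightarrow> character_of G \<rho> g = 0"
  unfolding character_of_def by simp

context group begin

lemma char_one:
  assumes "cplx_rep G d \<rho>"
  shows "character_of G \<rho> \<one> = of_nat d"
  using char_eq[OF assms] rep_one[OF assms] by (simp add: tr_def)

lemma char_conj:
  assumes "cplx_rep G d \<rho>" "g \<in> carrier G" "x \<in> carrier G"
  shows "character_of G \<rho> (x \<otimes> g \<otimes> inv x) = character_of G \<rho> g"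
proof -
  note R = rep_carrier[OF assms(1)]
  have X: "\<rho> x \<in> carrier_mat d d" "\<rho> g \<in> carrier_mat d d" "\<rho> (inv x) \<in> carrier_mat d d"
    using R assms by auto
  have "character_of G \<rho> (x \<otimes> g \<otimes> inv x) = tr ((\<rho> x * \<rho> g) * \<rho> (inv x))"
    using char_eq[OF assms(1)] rep_mult[OF assms(1)] assms by simp
  also have "\<dots> = tr (\<rho> (inv x) * (\<rho> x * \<rho> g))" by (rule tr_comm[of _ d d]) (use X in auto)
  also have "\<rho> (inv x) * (\<rho> x * \<rho> g) = (\<rho> (inv x) * \<rho> x) * \<rho> g" using X by simp
  also have "\<dots> = \<rho> g" using rep_inv[OF assms(1,3)] X by simp
  finally show ?thesis using char_eq[OF assms(1,2)] by simp
qed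

lemma char_inv:
  assumes "finite (carrier G)" "cplx_rep G d \<rho>" "g \<in> carrier G"
  shows "character_of G \<rho> (inv g) = cnj (character_of G \<rho> g)"
proof -
  define k where "k = order G"
  have k1: "k \<ge> 1" using order_gt_0_iff_finite assms(1) k_def by simp
  have gk: "g [^] k = \<one>" using pow_order_eq_1 assms(3) k_def by simp
  have "g [^] (k-1) \<otimes> g = \<one>" using gk k1 by (metis Suc_diff_le diff_Suc_1 nat_pow_Suc)
  hence ig: "inv g = g [^] (k-1)" using inv_equality assms(3) by simp
  have Rk: "\<rho> g ^\<^sub>m k = 1\<^sub>m d" using rep_pow[OF assms(2,3), of k] gk rep_one[OF assms(2)] by simp
  have "character_of G \<rho> (inv g) = tr (\<rho> g ^\<^sub>m (k-1))"
    using char_eq[OF assms(2)] ig rep_pow[OF assms(2,3)] assms(3) by simp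
  also have "\<dots> = cnj (tr (\<rho> g))" by (rule tr_pow_pred[OF rep_carrier[OF assms(2,3)] k1 Rk])
  finally show ?thesis using char_eq[OF assms(2,3)] by simp
qed

end

section \<open>Conjugate representation\<close>

definition crep :: "('a \<Rightarrow> complex Matrix.mat) \<Rightarrow> 'a \<Rightarrow> complex Matrix.mat" where
  "crep \<rho> = (\<lambda>g. map_mat cnj (\<rho> g))"

lemma map_cnj_mult:
  assumes A: "A \<in> carrier_mat n m" and B: "B \<in> carrier_mat m p"
  shows "map_mat cnj (A*B) = map_mat cnj A * map_mat cnj B"
proof (rule eq_matI)
  fix i j assume i: "i < dim_row (map_mat cnj A * map_mat cnj B)" and j: "j < dim_col (map_mat cnj A * map_mat cnj B)"
  have i': "i < n" and j': "j < p" using i j A B by auto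
  have A': "map_mat cnj A \<in> carrier_mat n m" and B': "map_mat cnj B \<in> carrier_mat m p" using A B by auto
  have "map_mat cnj (A*B) $$ (i,j) = cnj ((A*B) $$ (i,j))" using i' j' A B by simp
  also have "\<dots> = (\<Sum>k<m. cnj (A $$ (i,k)) * cnj (B $$ (k,j)))" using mult_entry[OF A B i' j'] by simp
  also have "\<dots> = (\<Sum>k<m. map_mat cnj A $$ (i,k) * map_mat cnj B $$ (k,j))"
    using A B i' j' by (auto intro!: sum.cong)
  also have "\<dots> = (map_mat cnj A * map_mat cnj B) $$ (i,j)" using mult_entry[OF A' B' i' j'] by simp
  finally show "map_mat cnj (A*B) $$ (i,j) = (map_mat cnj A * map_mat cnj B) $$ (i,j)" .
qed (use A B in auto)

lemma map_cnj_mult_vec: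
  assumes A: "A \<in> carrier_mat n m" and v: "v \<in> carrier_vec m"
  shows "map_vec cnj (A *\<^sub>v v) = map_mat cnj A *\<^sub>v map_vec cnj v"
proof (rule eq_vecI)
  fix i assume i: "i < dim_vec (map_mat cnj A *\<^sub>v map_vec cnj v)"
  have i': "i < n" using i A by auto
  have A': "map_mat cnj A \<in> carrier_mat n m" and v': "map_vec cnj v \<in> carrier_vec m" using A v by auto
  have "map_vec cnj (A *\<^sub>v v) $ i = cnj ((A *\<^sub>v v) $ i)" using i' A by simp
  also have "\<dots> = (\<Sum>k<m. cnj (A $$ (i,k)) * cnj (v $ k))" using mult_vec_entry[OF A v i'] by simp
  also have "\<dots> = (\<Sum>k<m. map_mat cnj A $$ (i,k) * map_vec cnj v $ k)"
    using A v i' by (auto intro!: sum.cong)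
  also have "\<dots> = (map_mat cnj A *\<^sub>v map_vec cnj v) $ i" using mult_vec_entry[OF A' v' i'] by simp
  finally show "map_vec cnj (A *\<^sub>v v) $ i = (map_mat cnj A *\<^sub>v map_vec cnj v) $ i" .
qed (use A v in auto)

lemma map_cnj_cnj_vec: "map_vec cnj (map_vec cnj v) = (v :: complex Matrix.vec)"
  by (rule eq_vecI) auto

lemma map_cnj_cnj_mat: "map_mat cnj (map_mat cnj A) = (A :: complex Matrix.mat)"
  by (rule eq_matI) auto

lemma crep_rep:
  assumes "cplx_rep G d \<rho>" shows "cplx_rep G d (crep \<rho>)"
  using assms unfolding cplx_rep_def crep_def
  by (auto simp: map_cnj_mult[of _ d d _ d] intro!: eq_matI)

lemma char_crep:
  assumes "cplx_rep G d \<rho>"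
  shows "character_of G (crep \<rho>) = (\<lambda>g. cnj (character_of G \<rho> g))"
proof
  fix g show "character_of G (crep \<rho>) g = cnj (character_of G \<rho> g)"
  proof (cases "g \<in> carrier G")
    case True
    thus ?thesis using char_eq[OF assms True] char_eq[OF crep_rep[OF assms] True] rep_carrier[OF assms True]
      by (simp add: tr_def crep_def)
  qed (simp add: char_out)
qed

lemma crep_irr:
  assumes irr: "irreducible_rep G d \<rho>"
  shows "irreducible_rep G d (crep \<rho>)"
proof -
  have rep: "cplx_rep G d \<rho>" using irr unfolding irreducible_rep_def by auto
  have R: "\<rho> g \<in> carrier_mat d d" if "g \<in> carrier G" for g using rep_carrier[OF rep that] .
  show ?thesis unfolding irreducible_rep_def
  proof (intro conjI allI impI)
    show "cplx_rep G d (crep \<rho>)" by (rule crep_rep[OF rep])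
    fix W assume W: "invariant_subspace G d (crep \<rho>) W"
    define W' where "W' = map_vec cnj ` W"
    have WW': "W = map_vec cnj ` W'" unfolding W'_def image_image map_cnj_cnj_vec by simp
    have sub: "W \<subseteq> carrier_vec d" using W unfolding invariant_subspace_def by auto
    have "invariant_subspace G d \<rho> W'"
      unfolding invariant_subspace_def
    proof (intro conjI ballI allI)
      show "W' \<subseteq> carrier_vec d" using sub unfolding W'_def by auto
      have "0\<^sub>v d \<in> W" using W unfolding invariant_subspace_def by auto
      moreover have "map_vec cnj (0\<^sub>v d) = 0\<^sub>v d" by (rule eq_vecI) auto
      ultimately show "0\<^sub>v d \<in> W'" unfolding W'_def by (metis image_eqI)
      fix v w assume v: "v \<in> W'" and w: "w \<in> W'"
      then obtain v0 w0 where v0: "v0 \<in> W" "v = map_vec cnj v0" and w0: "w0 \<in> W" "w = map_vec cnj w0"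
        unfolding W'_def by auto
      have cv: "v0 \<in> carrier_vec d" "w0 \<in> carrier_vec d" using v0 w0 sub by auto
      have "v0 + w0 \<in> W" using W v0 w0 unfolding invariant_subspace_def by auto
      moreover have "map_vec cnj (v0 + w0) = v + w" using v0 w0 cv by (intro eq_vecI) auto
      ultimately show "v + w \<in> W'" unfolding W'_def by (metis image_eqI)
    next
      fix c :: complex and v assume v: "v \<in> W'"
      then obtain v0 where v0: "v0 \<in> W" "v = map_vec cnj v0" unfolding W'_def by auto
      have "cnj c \<cdot>\<^sub>v v0 \<in> W" using W v0 unfolding invariant_subspace_def by auto
      moreover have "map_vec cnj (cnj c \<cdot>\<^sub>v v0) = c \<cdot>\<^sub>v v" using v0 by (intro eq_vecI) auto
      ultimately show "c \<cdot>\<^sub>v v \<in> W'" unfolding W'_def by (metis image_eqI)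
    next
      fix g v assume g: "g \<in> carrier G" and v: "v \<in> W'"
      then obtain v0 where v0: "v0 \<in> W" "v = map_vec cnj v0" unfolding W'_def by auto
      have "crep \<rho> g *\<^sub>v v0 \<in> W" using W v0 g unfolding invariant_subspace_def by auto
      moreover have "map_vec cnj (crep \<rho> g *\<^sub>v v0) = \<rho> g *\<^sub>v v"
        using map_cnj_mult_vec[of "crep \<rho> g" d d v0] v0 sub R[OF g]
        by (auto simp: crep_def map_cnj_cnj_mat)
      ultimately show "\<rho> g *\<^sub>v v \<in> W'" unfolding W'_def by (metis image_eqI)
    qed
    hence "W' = {0\<^sub>v d} \<or> W' = carrier_vec d" using irr unfolding irreducible_rep_def by auto
    moreover have "map_vec cnj (0\<^sub>v d) = 0\<^sub>v d" by (rule eq_vecI) auto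
    moreover have "map_vec cnj ` carrier_vec d = carrier_vec d"
    proof
      show "map_vec cnj ` carrier_vec d \<subseteq> carrier_vec d" by auto
      show "carrier_vec d \<subseteq> map_vec cnj ` carrier_vec d"
      proof
        fix v :: "complex Matrix.vec" assume "v \<in> carrier_vec d"
        thus "v \<in> map_vec cnj ` carrier_vec d"
          by (intro image_eqI[of _ _ "map_vec cnj v"]) (auto simp: map_cnj_cnj_vec)
      qed
    qed
    ultimately show "W = {0\<^sub>v d} \<or> W = carrier_vec d" unfolding WW' by auto
  qed
qed


section \<open>Schur's lemma and orthogonality\<close>

lemma mat_vec_unit:
  fixes A :: "complex Matrix.mat"
  assumes A: "A \<in> carrier_mat n m" and l: "l < m" and i: "i < n"
  shows "(A *\<^sub>v unit_vec m l) $ i = A $$ (i,l)"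
proof -
  have "(A *\<^sub>v unit_vec m l) $ i = (\<Sum>k<m. A $$ (i,k) * unit_vec m l $ k)"
    using mult_vec_entry[OF A _ i] by simp
  also have "\<dots> = (\<Sum>k<m. if k = l then A $$ (i,l) else 0)"
    using l by (intro sum.cong) auto
  also have "\<dots> = A $$ (i,l)" using l by simp
  finally show ?thesis .
qed

lemma mat_vec_zero:
  assumes A: "A \<in> carrier_mat n m"
  shows "A *\<^sub>v 0\<^sub>v m = 0\<^sub>v n"
  by (rule eq_vecI) (use A mult_vec_entry[OF A] in auto)

lemma schur_char:
  assumes irr1: "irreducible_rep G d \<rho>" and irr2: "irreducible_rep G e \<sigma>"
    and T: "T \<in> carrier_mat d e" and inter: "\<forall>h\<in>carrier G. \<rho> h * T = T * \<sigma> h"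
    and T0: "T \<noteq> 0\<^sub>m d e"
  shows "character_of G \<rho> = character_of G \<sigma>"
proof -
  have rep1: "cplx_rep G d \<rho>" and rep2: "cplx_rep G e \<sigma>"
    using irr1 irr2 unfolding irreducible_rep_def by auto
  note R1 = rep_carrier[OF rep1] and R2 = rep_carrier[OF rep2]
  obtain i l where il: "i < d" "l < e" "T $$ (i,l) \<noteq> 0"
  proof -
    have "\<exists>i l. i < d \<and> l < e \<and> T $$ (i,l) \<noteq> 0"
    proof (rule ccontr)
      assume "\<not> ?thesis"
      hence "T = 0\<^sub>m d e" using T by (intro eq_matI) auto
      thus False using T0 by simp
    qed
    thus ?thesis using that by blast
  qed
  define u where "u = (unit_vec e l :: complex Matrix.vec)"
  have u: "u \<in> carrier_vec e" unfolding u_def by simp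
  have Tu: "T *\<^sub>v u \<noteq> 0\<^sub>v d"
  proof
    assume "T *\<^sub>v u = 0\<^sub>v d"
    hence "(T *\<^sub>v u) $ i = 0" using il by simp
    thus False using mat_vec_unit[OF T il(2,1)] il u_def by simp
  qed
  define K where "K = {v \<in> carrier_vec e. T *\<^sub>v v = 0\<^sub>v d}"
  have "invariant_subspace G e \<sigma> K"
    unfolding invariant_subspace_def
  proof (intro conjI ballI allI)
    show "K \<subseteq> carrier_vec e" unfolding K_def by auto
    show "0\<^sub>v e \<in> K" unfolding K_def using mat_vec_zero[OF T] by simp
    fix v w assume v: "v \<in> K" and w: "w \<in> K"
    thus "v + w \<in> K" unfolding K_def using mult_add_distrib_mat_vec[OF T] by auto
  next
    fix c :: complex and v assume v: "v \<in> K"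
    thus "c \<cdot>\<^sub>v v \<in> K" unfolding K_def using mult_mat_vec[OF T] by auto
  next
    fix h v assume h: "h \<in> carrier G" and v: "v \<in> K"
    have "T *\<^sub>v (\<sigma> h *\<^sub>v v) = (T * \<sigma> h) *\<^sub>v v" using T R2[OF h] v unfolding K_def by simp
    also have "\<dots> = (\<rho> h * T) *\<^sub>v v" using inter h by simp
    also have "\<dots> = \<rho> h *\<^sub>v (T *\<^sub>v v)" using T R1[OF h] v unfolding K_def by simp
    also have "\<dots> = 0\<^sub>v d" using v mat_vec_zero[OF R1[OF h]] unfolding K_def by simp
    finally show "\<sigma> h *\<^sub>v v \<in> K" using v R2[OF h] unfolding K_def by auto
  qed
  hence "K = {0\<^sub>v e} \<or> K = carrier_vec e" using irr2 unfolding irreducible_rep_def by auto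
  moreover have "u \<notin> K" using Tu unfolding K_def by auto
  ultimately have K0: "K = {0\<^sub>v e}" using u by auto
  define I where "I = (\<lambda>v. T *\<^sub>v v) ` carrier_vec e"
  have "invariant_subspace G d \<rho> I"
    unfolding invariant_subspace_def
  proof (intro conjI ballI allI)
    show "I \<subseteq> carrier_vec d" unfolding I_def using T by auto
    show "0\<^sub>v d \<in> I" unfolding I_def using mat_vec_zero[OF T]
      by (metis image_eqI zero_carrier_vec)
    fix v w assume v: "v \<in> I" and w: "w \<in> I"
    then obtain v0 w0 where "v0 \<in> carrier_vec e" "w0 \<in> carrier_vec e" "v = T *\<^sub>v v0" "w = T *\<^sub>v w0"
      unfolding I_def by auto
    thus "v + w \<in> I" unfolding I_def using mult_add_distrib_mat_vec[OF T]
      by (metis add_carrier_vec image_eqI)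
  next
    fix c :: complex and v assume v: "v \<in> I"
    then obtain v0 where "v0 \<in> carrier_vec e" "v = T *\<^sub>v v0" unfolding I_def by auto
    thus "c \<cdot>\<^sub>v v \<in> I" unfolding I_def using mult_mat_vec[OF T]
      by (metis smult_carrier_vec image_eqI)
  next
    fix h v assume h: "h \<in> carrier G" and v: "v \<in> I"
    then obtain v0 where v0: "v0 \<in> carrier_vec e" "v = T *\<^sub>v v0" unfolding I_def by auto
    have "\<rho> h *\<^sub>v v = (\<rho> h * T) *\<^sub>v v0" using T R1[OF h] v0 by simp
    also have "\<dots> = (T * \<sigma> h) *\<^sub>v v0" using inter h by simp
    also have "\<dots> = T *\<^sub>v (\<sigma> h *\<^sub>v v0)" using T R2[OF h] v0 by simp
    finally show "\<rho> h *\<^sub>v v \<in> I" unfolding I_def using v0 R2[OF h]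
      by (metis image_eqI mult_mat_vec_carrier)
  qed
  hence "I = {0\<^sub>v d} \<or> I = carrier_vec d" using irr1 unfolding irreducible_rep_def by auto
  moreover have "T *\<^sub>v u \<in> I" unfolding I_def using u by auto
  ultimately have Ifull: "I = carrier_vec d" using Tu by auto
  have "\<forall>i<d. \<exists>s. s \<in> carrier_vec e \<and> T *\<^sub>v s = unit_vec d i"
  proof (intro allI impI)
    fix i assume "i < d"
    have "unit_vec d i \<in> I" using Ifull by simp
    thus "\<exists>s. s \<in> carrier_vec e \<and> T *\<^sub>v s = unit_vec d i" unfolding I_def by auto
  qed
  then obtain s where s: "\<And>i. i < d \<Longrightarrow> s i \<in> carrier_vec e \<and> T *\<^sub>v s i = unit_vec d i"
    by metis
  define S where "S = Matrix.mat e d (\<lambda>(k,i). s i $ k)"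
  have S: "S \<in> carrier_mat e d" unfolding S_def by simp
  have TS: "T * S = 1\<^sub>m d"
  proof (rule eq_matI)
    fix a i assume a: "a < dim_row (1\<^sub>m d)" and i: "i < dim_col (1\<^sub>m d)"
    hence a': "a < d" and i': "i < d" by auto
    have "(T * S) $$ (a,i) = (\<Sum>k<e. T $$ (a,k) * S $$ (k,i))" using mult_entry[OF T S a' i'] .
    also have "\<dots> = (\<Sum>k<e. T $$ (a,k) * s i $ k)" unfolding S_def using i' by (intro sum.cong) auto
    also have "\<dots> = (T *\<^sub>v s i) $ a" using mult_vec_entry[OF T conjunct1[OF s[OF i']] a'] by simp
    also have "\<dots> = 1\<^sub>m d $$ (a,i)" using s[OF i'] a' i' by simp
    finally show "(T * S) $$ (a,i) = 1\<^sub>m d $$ (a,i)" .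
  qed (use T S in auto)
  have ST: "S * T = 1\<^sub>m e"
  proof (rule eq_matI)
    fix k l assume k: "k < dim_row (1\<^sub>m e)" and l: "l < dim_col (1\<^sub>m e)"
    hence k': "k < e" and l': "l < e" by auto
    define ul where "ul = (unit_vec e l :: complex Matrix.vec)"
    have ul: "ul \<in> carrier_vec e" unfolding ul_def by simp
    define x where "x = S *\<^sub>v (T *\<^sub>v ul)"
    have x: "x \<in> carrier_vec e" unfolding x_def using S T ul by (meson mult_mat_vec_carrier)
    have "T *\<^sub>v x = (T * S) *\<^sub>v (T *\<^sub>v ul)" unfolding x_def using T S ul by simp
    also have "\<dots> = T *\<^sub>v ul" using TS T ul by simp
    finally have Tx: "T *\<^sub>v x = T *\<^sub>v ul" .
    have "T *\<^sub>v (x - ul) = T *\<^sub>v x - T *\<^sub>v ul" using mult_minus_distrib_mat_vec[OF T x ul] .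
    also have "\<dots> = 0\<^sub>v d" using Tx T ul by simp
    finally have "x - ul \<in> K" unfolding K_def using x ul by simp
    hence xu: "x - ul = 0\<^sub>v e" using K0 by simp
    have "(S * T) $$ (k,l) = ((S * T) *\<^sub>v ul) $ k"
      unfolding ul_def using mat_vec_unit[of "S*T" e e l k] S T k' l' by simp
    also have "\<dots> = x $ k" unfolding x_def using S T ul by simp
    also have "\<dots> = ul $ k"
    proof -
      have "(x - ul) $ k = 0" using xu k' by simp
      thus ?thesis using x ul k' by simp
    qed
    also have "\<dots> = 1\<^sub>m e $$ (k,l)" unfolding ul_def using k' l' by simp
    finally show "(S * T) $$ (k,l) = 1\<^sub>m e $$ (k,l)" .
  qed (use T S in auto)
  show ?thesis
  proof
    fix h show "character_of G \<rho> h = character_of G \<sigma> h"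
    proof (cases "h \<in> carrier G")
      case False thus ?thesis by (simp add: char_out)
    next
      case True
      note Rh = R1[OF True] and Sh = R2[OF True]
      have "tr (\<sigma> h) = tr (\<sigma> h * (S * T))" using ST Sh by simp
      also have "\<sigma> h * (S * T) = (\<sigma> h * S) * T" using Sh S T by simp
      also have "tr \<dots> = tr (T * (\<sigma> h * S))" by (rule tr_comm[of _ e d]) (use Sh S T in auto)
      also have "T * (\<sigma> h * S) = (T * \<sigma> h) * S" using Sh S T by simp
      also have "\<dots> = (\<rho> h * T) * S" using inter True by simp
      also have "\<dots> = \<rho> h * (T * S)" using Rh S T by simp
      also have "\<dots> = \<rho> h" using TS Rh by simp
      finally show ?thesis using char_eq[OF rep1 True] char_eq[OF rep2 True] by simp
    qed
  qed
qed

context group begin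

lemma sum_translate:
  assumes h: "h \<in> carrier G"
  shows "(\<Sum>g\<in>carrier G. F (h \<otimes> g)) = (\<Sum>g\<in>carrier G. F g)"
  by (rule sum.reindex_bij_witness[where i="\<lambda>g. inv h \<otimes> g" and j="\<lambda>g. h \<otimes> g"])
     (use h in \<open>auto simp: m_assoc[symmetric]\<close>)

lemma char_orth:
  assumes fin: "finite (carrier G)"
    and irr1: "irreducible_rep G d \<rho>" and irr2: "irreducible_rep G e \<sigma>"
    and ne: "character_of G \<rho> \<noteq> character_of G \<sigma>"
  shows "(\<Sum>g\<in>carrier G. character_of G \<rho> g * character_of G \<sigma> (inv g)) = 0"
proof -
  have rep1: "cplx_rep G d \<rho>" and rep2: "cplx_rep G e \<sigma>"
    using irr1 irr2 unfolding irreducible_rep_def by auto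
  note R1 = rep_carrier[OF rep1] and R2 = rep_carrier[OF rep2]
  have Z: "(\<Sum>g\<in>carrier G. \<rho> g $$ (i,j) * \<sigma> (inv g) $$ (k,l)) = 0"
    if ij: "i < d" "j < d" and kl: "k < e" "l < e" for i j k l
  proof -
    define T where "T = Matrix.mat d e (\<lambda>(i,l). \<Sum>g\<in>carrier G. \<rho> g $$ (i,j) * \<sigma> (inv g) $$ (k,l))"
    have T: "T \<in> carrier_mat d e" unfolding T_def by simp
    have inter: "\<forall>h\<in>carrier G. \<rho> h * T = T * \<sigma> h"
    proof
      fix h assume h: "h \<in> carrier G"
      show "\<rho> h * T = T * \<sigma> h"
      proof (rule eq_matI)
        fix a b assume a: "a < dim_row (T * \<sigma> h)" and b: "b < dim_col (T * \<sigma> h)"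
        hence a': "a < d" and b': "b < e" using T R2[OF h] by auto
        define \<Phi> where "\<Phi> = (\<lambda>x. \<rho> x $$ (a,j) * \<sigma> (inv x \<otimes> h) $$ (k,b))"
        have "(\<rho> h * T) $$ (a,b) = (\<Sum>m<d. \<rho> h $$ (a,m) * T $$ (m,b))"
          using mult_entry[OF R1[OF h] T a' b'] .
        also have "\<dots> = (\<Sum>m<d. \<rho> h $$ (a,m) * (\<Sum>g\<in>carrier G. \<rho> g $$ (m,j) * \<sigma> (inv g) $$ (k,b)))"
          unfolding T_def using b' by (intro sum.cong) auto
        also have "\<dots> = (\<Sum>g\<in>carrier G. (\<Sum>m<d. \<rho> h $$ (a,m) * \<rho> g $$ (m,j)) * \<sigma> (inv g) $$ (k,b))"
          unfolding sum_distrib_left sum_distrib_right by (subst sum.swap) (simp add: mult.assoc)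
        also have "\<dots> = (\<Sum>g\<in>carrier G. \<Phi> (h \<otimes> g))"
        proof (intro sum.cong refl)
          fix g assume g: "g \<in> carrier G"
          have "(\<Sum>m<d. \<rho> h $$ (a,m) * \<rho> g $$ (m,j)) = (\<rho> h * \<rho> g) $$ (a,j)"
            using mult_entry[OF R1[OF h] R1[OF g] a' ij(2)] by simp
          also have "\<dots> = \<rho> (h \<otimes> g) $$ (a,j)" using rep_mult[OF rep1 h g] by simp
          finally show "(\<Sum>m<d. \<rho> h $$ (a,m) * \<rho> g $$ (m,j)) * \<sigma> (inv g) $$ (k,b) = \<Phi> (h \<otimes> g)"
            unfolding \<Phi>_def using g h by (simp add: inv_mult_group m_assoc)
        qed
        also have "\<dots> = (\<Sum>g\<in>carrier G. \<Phi> g)" by (rule sum_translate[OF h])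
        also have "\<dots> = (\<Sum>g\<in>carrier G. \<rho> g $$ (a,j) * (\<Sum>m<e. \<sigma> (inv g) $$ (k,m) * \<sigma> h $$ (m,b)))"
        proof (intro sum.cong refl)
          fix g assume g: "g \<in> carrier G"
          have "\<sigma> (inv g \<otimes> h) $$ (k,b) = (\<sigma> (inv g) * \<sigma> h) $$ (k,b)"
            using rep_mult[OF rep2, of "inv g" h] g h by simp
          also have "\<dots> = (\<Sum>m<e. \<sigma> (inv g) $$ (k,m) * \<sigma> h $$ (m,b))"
            using mult_entry[OF R2 R2[OF h] kl(1) b'] g by simp
          finally show "\<Phi> g = \<rho> g $$ (a,j) * (\<Sum>m<e. \<sigma> (inv g) $$ (k,m) * \<sigma> h $$ (m,b))"
            unfolding \<Phi>_def by simp
        qed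
        also have "\<dots> = (\<Sum>m<e. (\<Sum>g\<in>carrier G. \<rho> g $$ (a,j) * \<sigma> (inv g) $$ (k,m)) * \<sigma> h $$ (m,b))"
          unfolding sum_distrib_left sum_distrib_right by (subst sum.swap) (simp add: mult.assoc)
        also have "\<dots> = (\<Sum>m<e. T $$ (a,m) * \<sigma> h $$ (m,b))"
          unfolding T_def using a' by (intro sum.cong) auto
        also have "\<dots> = (T * \<sigma> h) $$ (a,b)" using mult_entry[OF T R2[OF h] a' b'] by simp
        finally show "(\<rho> h * T) $$ (a,b) = (T * \<sigma> h) $$ (a,b)" .
      qed (use T R1[OF h] R2[OF h] in auto)
    qed
    have "T = 0\<^sub>m d e" using schur_char[OF irr1 irr2 T inter] ne by blast
    hence "T $$ (i,l) = 0" using ij kl by simp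
    thus ?thesis unfolding T_def using ij kl by simp
  qed
  have "(\<Sum>g\<in>carrier G. character_of G \<rho> g * character_of G \<sigma> (inv g))
      = (\<Sum>g\<in>carrier G. (\<Sum>i<d. \<rho> g $$ (i,i)) * (\<Sum>k<e. \<sigma> (inv g) $$ (k,k)))"
  proof (intro sum.cong refl)
    fix g assume g: "g \<in> carrier G"
    have "dim_row (\<rho> g) = d" "dim_row (\<sigma> (inv g)) = e" using R1[OF g] R2[of "inv g"] g by auto
    thus "character_of G \<rho> g * character_of G \<sigma> (inv g) = (\<Sum>i<d. \<rho> g $$ (i,i)) * (\<Sum>k<e. \<sigma> (inv g) $$ (k,k))"
      using char_eq[OF rep1 g] char_eq[OF rep2, of "inv g"] g by (simp add: tr_def)
  qed
  also have "\<dots> = (\<Sum>i<d. \<Sum>k<e. \<Sum>g\<in>carrier G. \<rho> g $$ (i,i) * \<sigma> (inv g) $$ (k,k))"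
    unfolding sum_product by (subst sum.swap) (subst (2) sum.swap, simp)
  also have "\<dots> = 0" using Z by simp
  finally show ?thesis .
qed

end


no_notation Matrix.vec_index (infixl "$" 100)

section \<open>Geometry\<close>

lemma vm_component: "(x v* V) $ j = (\<Sum>i\<in>UNIV. x $ i * V $ i $ j)"
  unfolding vector_matrix_mult_def by simp

lemma vm_linear: "linear (\<lambda>x::real^'n. x v* (V::real^'m^'n))"
proof (rule linearI)
  fix x y :: "real^'n"
  show "(x + y) v* V = x v* V + y v* V"
    by (simp add: vec_eq_iff vm_component sum.distrib distrib_right)
next
  fix r :: real and x :: "real^'n"
  show "(r *\<^sub>R x) v* V = r *\<^sub>R (x v* V)" by (rule scaleR_vector_matrix_assoc)
qed

lemma vm_sum: "(\<Sum>j\<in>A. f j) v* V = (\<Sum>j\<in>A. f j v* (V::real^'m^'n))"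
  by (rule linear_sum[OF vm_linear])

lemma sum_axis: "(\<Sum>j\<in>UNIV. axis j (y $ j)) = (y :: real^'n)"
  by (simp add: vec_eq_iff axis_def)

lemma simplex_lemma:
  fixes V :: "real^'n^'n" and i0 :: 'n and w :: "'n \<Rightarrow> real"
  assumes inj0: "\<And>x. x v* V = 0 \<Longrightarrow> x = 0"
    and wpos: "\<And>j. w j > 0"
    and key: "\<And>x. x $ i0 = (\<Sum>j\<in>UNIV. w j * (x v* V) $ j)"
  shows "(int CARD('n) - 1) simplex {x. (\<forall>j. 0 \<le> (x v* V) $ j) \<and> x $ i0 = 1}"
proof -
  define L where "L = (\<lambda>x::real^'n. x v* V)"
  have lin: "linear L" unfolding L_def by (rule vm_linear)
  have injL: "inj L" using linear_injective_0[OF lin] inj0 unfolding L_def by auto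
  have surjL: "surj L" by (rule linear_injective_imp_surjective[OF lin injL refl])
  define p where "p = (\<lambda>j. SOME x. L x = axis j (1 / w j))"
  have Lp: "L (p j) = axis j (1 / w j)" for j
    unfolding p_def using surjL by (metis (mono_tags, lifting) someI_ex surjD)
  have injp: "inj p"
  proof (rule injI)
    fix j k assume "p j = p k"
    hence "axis j (1 / w j) = axis k (1 / w k)" using Lp by metis
    thus "j = k" using wpos[of j] by (auto simp: axis_eq_axis)
  qed
  define C where "C = range p"
  define S where "S = {x. (\<forall>j. 0 \<le> (x v* V) $ j) \<and> x $ i0 = 1}"
  have finC: "finite C" unfolding C_def by simp
  have cardC: "card C = CARD('n)" unfolding C_def using injp by (simp add: card_image)
  have CS: "C \<subseteq> S"
  proof
    fix x assume "x \<in> C"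
    then obtain j where x: "x = p j" unfolding C_def by auto
    have Lx: "x v* V = axis j (1 / w j)" using Lp x unfolding L_def by simp
    have "(\<forall>k. 0 \<le> (x v* V) $ k)" using Lx wpos by (simp add: axis_def less_imp_le)
    moreover have "x $ i0 = 1"
    proof -
      have "x $ i0 = (\<Sum>k\<in>UNIV. w k * (axis j (1 / w j)) $ k)" using key[of x] Lx by simp
      also have "\<dots> = (\<Sum>k\<in>UNIV. if k = j then w j * (1 / w j) else 0)"
        by (intro sum.cong) (auto simp: axis_def)
      also have "\<dots> = 1" using wpos[of j] by simp
      finally show ?thesis .
    qed
    ultimately show "x \<in> S" unfolding S_def by simp
  qed
  have convS: "convex S"
  proof (rule convexI)
    fix x y :: "real^'n" and u v :: real
    assume x: "x \<in> S" and y: "y \<in> S" and uv: "0 \<le> u" "0 \<le> v" "u + v = 1"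
    have eq: "(u *\<^sub>R x + v *\<^sub>R y) v* V = u *\<^sub>R (x v* V) + v *\<^sub>R (y v* V)"
      using linear_add[OF vm_linear] linear_scale[OF vm_linear] by metis
    have "0 \<le> ((u *\<^sub>R x + v *\<^sub>R y) v* V) $ j" for j using x y uv unfolding eq S_def by simp
    moreover have "(u *\<^sub>R x + v *\<^sub>R y) $ i0 = 1" using x y uv unfolding S_def by simp
    ultimately show "u *\<^sub>R x + v *\<^sub>R y \<in> S" unfolding S_def by simp
  qed
  have "S = convex hull C"
  proof
    show "convex hull C \<subseteq> S" using hull_minimal[of C S convex] CS convS by simp
    show "S \<subseteq> convex hull C"
    proof
      fix x assume x: "x \<in> S"
      define a where "a = (\<lambda>j. w j * (x v* V) $ j)"
      have a0: "a j \<ge> 0" for j using x wpos unfolding a_def S_def by (simp add: less_imp_le)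
      have a1: "(\<Sum>j\<in>UNIV. a j) = 1" using key[of x] x unfolding a_def S_def by simp
      define z where "z = (\<Sum>j\<in>UNIV. a j *\<^sub>R p j)"
      have "z \<in> convex hull C" unfolding z_def
        by (rule convex_sum[OF _ convex_convex_hull a1 a0]) (auto simp: C_def intro: hull_inc)
      moreover have "L z = L x"
      proof -
        have "L z = (\<Sum>j\<in>UNIV. a j *\<^sub>R L (p j))" unfolding z_def
          by (simp add: linear_sum[OF lin] linear_scale[OF lin])
        also have "\<dots> = (\<Sum>j\<in>UNIV. axis j ((x v* V) $ j))"
        proof (intro sum.cong refl)
          fix j show "a j *\<^sub>R L (p j) = axis j ((x v* V) $ j)"
            unfolding Lp a_def using wpos[of j] by (simp add: vec_eq_iff axis_def)
        qed
        also have "\<dots> = L x" unfolding L_def by (rule sum_axis)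
        finally show ?thesis .
      qed
      ultimately show "x \<in> convex hull C" using injL by (metis injD)
    qed
  qed
  moreover have "\<not> affine_dependent C"
  proof
    assume "affine_dependent C"
    then obtain U where U: "sum U C = 0" "\<exists>v\<in>C. U v \<noteq> 0" "(\<Sum>v\<in>C. U v *\<^sub>R v) = 0"
      using affine_dependent_explicit_finite[OF finC] by auto
    have "(\<Sum>j\<in>UNIV. U (p j) *\<^sub>R p j) = 0"
      using U(3) unfolding C_def by (simp add: sum.reindex[OF injp])
    hence "L (\<Sum>j\<in>UNIV. U (p j) *\<^sub>R p j) = 0" using linear_0[OF lin] by simp
    hence "(\<Sum>j\<in>UNIV. U (p j) *\<^sub>R axis j (1 / w j)) = 0"
      by (simp add: linear_sum[OF lin] linear_scale[OF lin] Lp)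
    hence "(\<Sum>j\<in>UNIV. U (p j) *\<^sub>R axis j (1 / w j)) $ k = 0" for k by simp
    hence Uk: "U (p k) * (1 / w k) = 0" for k
    proof -
      have "(\<Sum>j\<in>UNIV. U (p j) *\<^sub>R axis j (1 / w j)) $ k = (\<Sum>j\<in>UNIV. if j = k then U (p k) * (1 / w k) else 0)"
        unfolding sum_component vector_scaleR_component axis_def vec_lambda_beta by (intro sum.cong) auto
      thus ?thesis using \<open>\<And>k. (\<Sum>j\<in>UNIV. U (p j) *\<^sub>R axis j (1 / w j)) $ k = 0\<close>[of k] by simp
    qed
    have "U (p k) = 0" for k using Uk[of k] wpos[of k] by simp
    thus False using U(2) unfolding C_def by auto
  qed
  ultimately show ?thesis unfolding simplex_def S_def[symmetric] using cardC by (intro exI[of _ C]) auto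
qed

lemma interior_lemma:
  fixes V :: "real^'n^'n" and i0 :: 'n
  assumes row: "\<And>j. V $ i0 $ j = 1"
  shows "\<exists>\<epsilon>>0. \<forall>y::real^'n. y $ i0 = 1 \<and> dist y (axis i0 1) < \<epsilon> \<longrightarrow>
           y \<in> {x. (\<forall>j. 0 \<le> (x v* V) $ j) \<and> x $ i0 = 1}"
proof -
  define M where "M = (\<Sum>j\<in>UNIV. \<Sum>i\<in>UNIV. \<bar>((V::real^'n^'n) $ i) $ j\<bar>) + 1"
  have M0: "M > 0" unfolding M_def by (smt (verit) sum_nonneg abs_ge_zero)
  have Mj: "(\<Sum>i\<in>UNIV. \<bar>(V $ i) $ j\<bar>) \<le> M - 1" for j
  proof -
    have "(\<Sum>i\<in>UNIV. \<bar>(V $ i) $ j\<bar>) \<le> (\<Sum>j\<in>UNIV. \<Sum>i\<in>UNIV. \<bar>(V $ i) $ j\<bar>)"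
      by (rule member_le_sum) (auto intro: sum_nonneg)
    thus ?thesis unfolding M_def by simp
  qed
  show ?thesis
  proof (intro exI[of _ "1/M"] conjI allI impI)
    show "1/M > 0" using M0 by simp
    fix y :: "real^'n" assume y: "y $ i0 = 1 \<and> dist y (axis i0 1) < 1/M"
    define d where "d = y - axis i0 1"
    have dn: "\<bar>d $ i\<bar> < 1/M" for i
      using component_le_norm_cart[of d i] y unfolding d_def dist_norm by simp
    have "0 \<le> (y v* V) $ j" for j
    proof -
      have "(y v* V) $ j = (\<Sum>i\<in>UNIV. (axis i0 1 + d) $ i * V $ i $ j)"
        unfolding d_def vm_component by simp
      also have "\<dots> = (\<Sum>i\<in>UNIV. (if i = i0 then V $ i $ j else 0) + d $ i * V $ i $ j)"
        by (intro sum.cong) (auto simp: axis_def distrib_right)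
      also have "\<dots> = (\<Sum>i\<in>UNIV. (if i = i0 then V $ i $ j else 0)) + (\<Sum>i\<in>UNIV. d $ i * V $ i $ j)"
        by (rule sum.distrib)
      also have "(\<Sum>i\<in>UNIV. (if i = i0 then V $ i $ j else 0)) = 1" using row by simp
      finally have eq: "(y v* V) $ j = 1 + (\<Sum>i\<in>UNIV. d $ i * V $ i $ j)" .
      have "\<bar>\<Sum>i\<in>UNIV. d $ i * V $ i $ j\<bar> \<le> (\<Sum>i\<in>UNIV. \<bar>d $ i\<bar> * \<bar>(V $ i) $ j\<bar>)"
        by (rule order_trans[OF sum_abs]) (simp add: abs_mult)
      also have "\<dots> \<le> (\<Sum>i\<in>UNIV. (1/M) * \<bar>(V $ i) $ j\<bar>)"
        by (intro sum_mono mult_right_mono) (use dn in \<open>auto intro: less_imp_le\<close>)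
      also have "\<dots> = (1/M) * (\<Sum>i\<in>UNIV. \<bar>(V $ i) $ j\<bar>)" by (simp add: sum_distrib_left)
      also have "\<dots> \<le> (1/M) * (M - 1)" using Mj[of j] M0 by (intro mult_left_mono) auto
      also have "\<dots> < 1" using M0 by (simp add: field_simps)
      finally show ?thesis unfolding eq by linarith
    qed
    thus "y \<in> {x. (\<forall>j. 0 \<le> (x v* V) $ j) \<and> x $ i0 = 1}" using y by simp
  qed
qed



section \<open>Real characters\<close>

definition Fr :: "('a \<Rightarrow> complex) \<Rightarrow> 'a \<Rightarrow> complex" where
  "Fr ch = (if (cnj \<circ> ch) = ch then ch else (\<lambda>g. ch g + cnj (ch g)))"

definition ipG :: "('a, 'b) monoid_scheme \<Rightarrow> ('a \<Rightarrow> complex) \<Rightarrow> ('a \<Rightarrow> complex) \<Rightarrow> complex" where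
  "ipG G f h = (\<Sum>g\<in>carrier G. f g * cnj (h g))"

lemma real_irr_chars_Fr: "real_irr_chars G = Fr ` irr_chars G"
  unfolding real_irr_chars_def Fr_def[abs_def] by simp

lemma cnj_cnj_comp: "cnj \<circ> (cnj \<circ> ch) = ch"
  by (simp add: comp_def)

lemma Fr_cnj: "Fr (cnj \<circ> ch) = Fr ch"
proof (cases "cnj \<circ> ch = ch")
  case True thus ?thesis by simp
next
  case False
  hence "cnj \<circ> (cnj \<circ> ch) \<noteq> cnj \<circ> ch" by (metis cnj_cnj_comp)
  thus ?thesis using False unfolding Fr_def by (auto simp: cnj_cnj_comp add.commute)
qed

lemma Fr_sum: "Fr ch = (\<lambda>g. \<Sum>\<alpha>\<in>{ch, cnj \<circ> ch}. \<alpha> g)"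
proof (cases "cnj \<circ> ch = ch")
  case True thus ?thesis unfolding Fr_def by simp
next
  case False
  hence "ch \<noteq> cnj \<circ> ch" by metis
  thus ?thesis using False unfolding Fr_def by auto
qed

lemma Fr_real: "cnj (Fr ch g) = Fr ch g"
proof (cases "cnj \<circ> ch = ch")
  case True
  hence "cnj (ch g) = ch g" by (metis comp_apply)
  thus ?thesis using True unfolding Fr_def by simp
next
  case False thus ?thesis unfolding Fr_def by (simp add: add.commute)
qed

lemma ip_sum:
  assumes "finite A" "finite B"
  shows "ipG G (\<lambda>g. \<Sum>\<alpha>\<in>A. \<alpha> g) (\<lambda>g. \<Sum>\<beta>\<in>B. \<beta> g) = (\<Sum>\<alpha>\<in>A. \<Sum>\<beta>\<in>B. ipG G \<alpha> \<beta>)"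
proof -
  have "ipG G (\<lambda>g. \<Sum>\<alpha>\<in>A. \<alpha> g) (\<lambda>g. \<Sum>\<beta>\<in>B. \<beta> g) = (\<Sum>g\<in>carrier G. \<Sum>\<alpha>\<in>A. \<Sum>\<beta>\<in>B. \<alpha> g * cnj (\<beta> g))"
    unfolding ipG_def cnj_sum sum_product by simp
  also have "\<dots> = (\<Sum>\<alpha>\<in>A. \<Sum>g\<in>carrier G. \<Sum>\<beta>\<in>B. \<alpha> g * cnj (\<beta> g))" by (rule sum.swap)
  also have "\<dots> = (\<Sum>\<alpha>\<in>A. \<Sum>\<beta>\<in>B. \<Sum>g\<in>carrier G. \<alpha> g * cnj (\<beta> g))"
    by (intro sum.cong refl) (rule sum.swap)
  finally show ?thesis unfolding ipG_def .
qed

lemma ip_self: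
  assumes "finite (carrier G)" "a \<in> carrier G" "f a \<noteq> 0"
  shows "ipG G f f \<noteq> 0"
proof -
  have eq: "f g * cnj (f g) = complex_of_real ((cmod (f g))^2)" for g
    by (rule complex_norm_square[symmetric])
  have "ipG G f f = complex_of_real (\<Sum>g\<in>carrier G. (cmod (f g))^2)"
    unfolding ipG_def eq by simp
  moreover have "(cmod (f a))^2 \<le> (\<Sum>g\<in>carrier G. (cmod (f g))^2)"
    by (rule member_le_sum) (use assms in auto)
  moreover have "(cmod (f a))^2 > 0" using assms by simp
  ultimately show ?thesis by (metis less_le_trans of_real_eq_0_iff order_less_irrefl)
qed

context group begin

lemma irr_char_rep:
  assumes "ch \<in> irr_chars G"
  obtains d \<rho> where "irreducible_rep G d \<rho>" "ch = character_of G \<rho>"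
  using assms unfolding irr_chars_def by auto

lemma irr_cnj: "ch \<in> irr_chars G \<Longrightarrow> (cnj \<circ> ch) \<in> irr_chars G"
proof -
  assume "ch \<in> irr_chars G"
  then obtain d \<rho> where irr: "irreducible_rep G d \<rho>" and chi: "ch = character_of G \<rho>"
    by (rule irr_char_rep)
  have rep: "cplx_rep G d \<rho>" using irr unfolding irreducible_rep_def by auto
  have "cnj \<circ> ch = character_of G (crep \<rho>)" using char_crep[OF rep] chi by (simp add: comp_def)
  thus ?thesis using crep_irr[OF irr] unfolding irr_chars_def by auto
qed

lemma irr_inv: "finite (carrier G) \<Longrightarrow> ch \<in> irr_chars G \<Longrightarrow> g \<in> carrier G \<Longrightarrow> ch (inv g) = cnj (ch g)"
  by (metis irr_char_rep irreducible_rep_def char_inv)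

lemma irr_conj: "ch \<in> irr_chars G \<Longrightarrow> g \<in> carrier G \<Longrightarrow> x \<in> carrier G \<Longrightarrow> ch (x \<otimes> g \<otimes> inv x) = ch g"
  by (metis irr_char_rep irreducible_rep_def char_conj)

lemma irr_one: "ch \<in> irr_chars G \<Longrightarrow> \<exists>d>0. ch \<one> = of_nat d"
  by (metis irr_char_rep irreducible_rep_def char_one cplx_rep_def)

lemma irr_orth:
  assumes fin: "finite (carrier G)" and a: "ch \<in> irr_chars G" and b: "chb \<in> irr_chars G" and ne: "ch \<noteq> chb"
  shows "ipG G ch chb = 0"
proof -
  obtain d \<rho> where irr1: "irreducible_rep G d \<rho>" and c1: "ch = character_of G \<rho>" using a by (rule irr_char_rep)
  obtain e \<sigma> where irr2: "irreducible_rep G e \<sigma>" and c2: "chb = character_of G \<sigma>" using b by (rule irr_char_rep)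
  have "ipG G ch chb = (\<Sum>g\<in>carrier G. character_of G \<rho> g * character_of G \<sigma> (inv g))"
    unfolding ipG_def using irr_inv[OF fin b] c1 c2 by (intro sum.cong) auto
  also have "\<dots> = 0" using char_orth[OF fin irr1 irr2] ne c1 c2 by simp
  finally show ?thesis .
qed

lemma Fr_orth:
  assumes fin: "finite (carrier G)" and a: "ch \<in> irr_chars G" and b: "chb \<in> irr_chars G"
    and ne: "Fr ch \<noteq> Fr chb"
  shows "ipG G (Fr ch) (Fr chb) = 0"
proof -
  have "ipG G (Fr ch) (Fr chb) = (\<Sum>\<alpha>\<in>{ch, cnj \<circ> ch}. \<Sum>\<beta>\<in>{chb, cnj \<circ> chb}. ipG G \<alpha> \<beta>)"
    unfolding Fr_sum[of ch] Fr_sum[of chb] by (rule ip_sum) auto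
  also have "\<dots> = 0"
  proof (intro sum.neutral ballI)
    fix \<alpha> \<beta> assume al: "\<alpha> \<in> {ch, cnj \<circ> ch}" and be: "\<beta> \<in> {chb, cnj \<circ> chb}"
    have Fa: "Fr \<alpha> = Fr ch" using al Fr_cnj by auto
    have Fb: "Fr \<beta> = Fr chb" using be Fr_cnj by auto
    have "\<alpha> \<in> irr_chars G" using al a irr_cnj by auto
    moreover have "\<beta> \<in> irr_chars G" using be b irr_cnj by auto
    moreover have "\<alpha> \<noteq> \<beta>" using Fa Fb ne by auto
    ultimately show "ipG G \<alpha> \<beta> = 0" by (rule irr_orth[OF fin])
  qed
  finally show ?thesis .
qed

lemma Fr_inv:
  assumes fin: "finite (carrier G)" and a: "ch \<in> irr_chars G" and g: "g \<in> carrier G"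
  shows "Fr ch (inv g) = Fr ch g"
proof -
  have i: "ch (inv g) = cnj (ch g)" by (rule irr_inv[OF fin a g])
  show ?thesis
  proof (cases "cnj \<circ> ch = ch")
    case True
    hence "cnj (ch g) = ch g" by (metis comp_apply)
    thus ?thesis using True i unfolding Fr_def by simp
  next
    case False thus ?thesis using i unfolding Fr_def by (simp add: add.commute)
  qed
qed

lemma Fr_conj:
  assumes a: "ch \<in> irr_chars G" and g: "g \<in> carrier G" and x: "x \<in> carrier G"
  shows "Fr ch (x \<otimes> g \<otimes> inv x) = Fr ch g"
  using irr_conj[OF a g x] unfolding Fr_def by simp

lemma Fr_coic:
  assumes fin: "finite (carrier G)" and a: "ch \<in> irr_chars G" and g: "g \<in> carrier G"
    and r: "conj_or_inv_conj G g h"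
  shows "Fr ch h = Fr ch g"
proof -
  obtain x where x: "x \<in> carrier G" and h: "h = x \<otimes> g \<otimes> inv x \<or> h = x \<otimes> inv g \<otimes> inv x"
    using r unfolding conj_or_inv_conj_def by auto
  from h show ?thesis
  proof
    assume "h = x \<otimes> g \<otimes> inv x" thus ?thesis using Fr_conj[OF a g x] by simp
  next
    assume "h = x \<otimes> inv g \<otimes> inv x"
    thus ?thesis using Fr_conj[OF a _ x, of "inv g"] Fr_inv[OF fin a g] g by simp
  qed
qed

lemma Fr_one: assumes a: "ch \<in> irr_chars G" shows "Fr ch \<one> \<noteq> 0"
proof -
  obtain d where d: "d > 0" "ch \<one> = of_nat d" using irr_one[OF a] by auto
  show ?thesis
  proof (cases "cnj \<circ> ch = ch")
    case True thus ?thesis using d unfolding Fr_def by simp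
  next
    case False
    have "Fr ch \<one> = of_nat (d + d)" using False d unfolding Fr_def by simp
    thus ?thesis using d by auto
  qed
qed

end


lemma sum_fiber:
  fixes J :: "'a \<Rightarrow> 'n::finite" and h :: "'n \<Rightarrow> complex"
  assumes "finite A"
  shows "(\<Sum>g\<in>A. h (J g)) = (\<Sum>j\<in>UNIV. of_nat (card {g\<in>A. J g = j}) * h j)"
proof -
  have "(\<Sum>g\<in>A. h (J g)) = (\<Sum>g\<in>A. \<Sum>j\<in>UNIV. if J g = j then h j else 0)" by simp
  also have "\<dots> = (\<Sum>j\<in>UNIV. \<Sum>g\<in>A. if J g = j then h j else 0)" by (rule sum.swap)
  also have "\<dots> = (\<Sum>j\<in>UNIV. of_nat (card {g\<in>A. J g = j}) * h j)"
    by (intro sum.cong refl) (simp add: sum.inter_filter[symmetric] assms)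
  finally show ?thesis .
qed

context group begin

lemma table_facts:
  fixes \<psi> :: "'n::finite \<Rightarrow> 'a \<Rightarrow> complex" and c :: "'n \<Rightarrow> 'a" and i0 :: 'n and V :: "real^'n^'n"
  assumes fin: "finite (carrier G)" and tab: "is_real_char_table G \<psi> c i0 V"
  shows "(\<forall>x. x v* V = 0 \<longrightarrow> x = 0) \<and>
         (\<exists>w. (\<forall>j. w j > 0) \<and> (\<forall>x. x $ i0 = (\<Sum>j\<in>UNIV. w j * (x v* V) $ j))) \<and>
         (\<forall>j. V $ i0 $ j = 1)"
proof -
  have bij: "bij_betw \<psi> UNIV (real_irr_chars G)" and triv: "\<psi> i0 = trivial_char G"
    and cG: "\<And>j. c j \<in> carrier G" and uq: "\<And>g. g \<in> carrier G \<Longrightarrow> \<exists>!j. conj_or_inv_conj G (c j) g"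
    and Vd: "\<And>i j. V $ i $ j = Re (\<psi> i (c j))"
    using tab unfolding is_real_char_table_def by auto
  have "\<forall>i. \<exists>ch. ch \<in> irr_chars G \<and> \<psi> i = Fr ch"
    using bij_betw_imp_surj_on[OF bij] unfolding real_irr_chars_Fr by auto
  then obtain ch where ch: "\<And>i. ch i \<in> irr_chars G" and psi: "\<And>i. \<psi> i = Fr (ch i)" by metis
  have injpsi: "inj \<psi>" using bij_betw_imp_inj_on[OF bij] .
  have orth: "ipG G (\<psi> i) (\<psi> k) = 0" if "i \<noteq> k" for i k
  proof -
    have "\<psi> i \<noteq> \<psi> k" using injpsi that by (metis injD)
    thus ?thesis using Fr_orth[OF fin ch ch] psi by metis
  qed
  have one: "\<one> \<in> carrier G" by simp
  have pos: "ipG G (\<psi> k) (\<psi> k) \<noteq> 0" for k using ip_self[OF fin one] Fr_one[OF ch] psi by metis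
  have real: "cnj (\<psi> i g) = \<psi> i g" for i g using Fr_real psi by metis
  have psiV: "\<psi> i (c j) = complex_of_real (V $ i $ j)" for i j
    using real[of i "c j"] Vd[of i j] by (simp add: complex_eq_iff)
  define J where "J = (\<lambda>g. THE j. conj_or_inv_conj G (c j) g)"
  have J: "conj_or_inv_conj G (c (J g)) g" if "g \<in> carrier G" for g
    unfolding J_def using theI'[OF uq[OF that]] .
  have Jc: "J (c j) = j" for j
  proof -
    have "conj_or_inv_conj G (c j) (c j)" unfolding conj_or_inv_conj_def
      using cG[of j] by (intro bexI[of _ \<one>]) auto
    thus ?thesis unfolding J_def using the1_equality[OF uq[OF cG[of j]]] by blast
  qed
  have psiJ: "\<psi> i g = complex_of_real (V $ i $ J g)" if g: "g \<in> carrier G" for i g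
  proof -
    have "\<psi> i g = Fr (ch i) (c (J g))" using Fr_coic[OF fin ch cG J[OF g]] psi by simp
    also have "\<dots> = complex_of_real (V $ i $ J g)" using psiV psi by simp
    finally show ?thesis .
  qed
  have trivip: "ipG G f (\<psi> i0) = (\<Sum>g\<in>carrier G. f g)" for f
    unfolding ipG_def triv trivial_char_def by (intro sum.cong) auto
  define nG where "nG = card (carrier G)"
  have nG: "nG > 0" unfolding nG_def using fin one card_gt_0_iff by blast
  have ip00: "ipG G (\<psi> i0) (\<psi> i0) = of_nat nG"
    using trivip[of "\<psi> i0"] unfolding triv trivial_char_def nG_def by simp
  define fx where "fx = (\<lambda>(x::real^'n) g. \<Sum>i\<in>UNIV. complex_of_real (x $ i) * \<psi> i g)"
  have lin: "ipG G (fx x) h = (\<Sum>i\<in>UNIV. complex_of_real (x $ i) * ipG G (\<psi> i) h)" for x h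
  proof -
    have "ipG G (fx x) h = (\<Sum>g\<in>carrier G. \<Sum>i\<in>UNIV. complex_of_real (x $ i) * (\<psi> i g * cnj (h g)))"
      unfolding ipG_def fx_def by (simp add: sum_distrib_right mult.assoc)
    also have "\<dots> = (\<Sum>i\<in>UNIV. \<Sum>g\<in>carrier G. complex_of_real (x $ i) * (\<psi> i g * cnj (h g)))"
      by (rule sum.swap)
    also have "\<dots> = (\<Sum>i\<in>UNIV. complex_of_real (x $ i) * ipG G (\<psi> i) h)"
      unfolding ipG_def by (simp add: sum_distrib_left)
    finally show ?thesis .
  qed
  have ipk: "ipG G (fx x) (\<psi> k) = complex_of_real (x $ k) * ipG G (\<psi> k) (\<psi> k)" for x k
  proof -
    have "ipG G (fx x) (\<psi> k) = (\<Sum>i\<in>UNIV. if i = k then complex_of_real (x $ k) * ipG G (\<psi> k) (\<psi> k) else 0)"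
      unfolding lin using orth by (intro sum.cong) auto
    thus ?thesis by simp
  qed
  have fxJ: "fx x g = complex_of_real ((x v* V) $ J g)" if g: "g \<in> carrier G" for x g
    unfolding fx_def vm_component using psiJ[OF g] by simp
  have inj0: "\<forall>x. x v* V = 0 \<longrightarrow> x = 0"
  proof (intro allI impI)
    fix x :: "real^'n" assume x: "x v* V = 0"
    have "x $ k = 0" for k
    proof -
      have "ipG G (fx x) (\<psi> k) = 0" unfolding ipG_def using fxJ x by simp
      thus ?thesis using ipk[of x k] pos[of k] by simp
    qed
    thus "x = 0" by (simp add: vec_eq_iff)
  qed
  define w where "w = (\<lambda>j. real (card {g\<in>carrier G. J g = j}) / real nG)"
  have wpos: "\<forall>j. w j > 0"
  proof
    fix j
    have "c j \<in> {g\<in>carrier G. J g = j}" using cG Jc by simp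
    hence "card {g\<in>carrier G. J g = j} > 0" using fin card_gt_0_iff by fastforce
    thus "w j > 0" unfolding w_def using nG by simp
  qed
  have key: "\<forall>x. x $ i0 = (\<Sum>j\<in>UNIV. w j * (x v* V) $ j)"
  proof
    fix x :: "real^'n"
    have "complex_of_real (x $ i0) * of_nat nG = (\<Sum>g\<in>carrier G. fx x g)"
      using ipk[of x i0] ip00 trivip[of "fx x"] by simp
    also have "\<dots> = (\<Sum>g\<in>carrier G. complex_of_real ((x v* V) $ J g))" using fxJ by simp
    also have "\<dots> = (\<Sum>j\<in>UNIV. of_nat (card {g\<in>carrier G. J g = j}) * complex_of_real ((x v* V) $ j))"
      by (rule sum_fiber[OF fin])
    also have "\<dots> = complex_of_real (\<Sum>j\<in>UNIV. real (card {g\<in>carrier G. J g = j}) * (x v* V) $ j)"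
      by simp
    finally have "complex_of_real (x $ i0 * real nG) = complex_of_real (\<Sum>j\<in>UNIV. real (card {g\<in>carrier G. J g = j}) * (x v* V) $ j)"
      by simp
    hence "x $ i0 * real nG = (\<Sum>j\<in>UNIV. real (card {g\<in>carrier G. J g = j}) * (x v* V) $ j)"
      by (simp only: of_real_eq_iff)
    hence "x $ i0 = (\<Sum>j\<in>UNIV. real (card {g\<in>carrier G. J g = j}) * (x v* V) $ j) / real nG"
      using nG by (simp add: field_simps)
    also have "\<dots> = (\<Sum>j\<in>UNIV. w j * (x v* V) $ j)"
      unfolding w_def sum_divide_distrib by (simp add: field_simps)
    finally show "x $ i0 = (\<Sum>j\<in>UNIV. w j * (x v* V) $ j)" .
  qed
  have row: "\<forall>j. V $ i0 $ j = 1" using Vd triv cG by (simp add: trivial_char_def)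
  show ?thesis using inj0 wpos key row by blast
qed

end

theorem proposition2p1:
  fixes G :: "('a, 'b) monoid_scheme"
    and \<psi> :: "'n::finite \<Rightarrow> 'a \<Rightarrow> complex"
    and c :: "'n \<Rightarrow> 'a" and i0 :: 'n and V :: "real^'n^'n"
  assumes "group G" and "finite (carrier G)"
    and "is_real_char_table G \<psi> c i0 V"
  shows "(int CARD('n) - 1) simplex (S_polyhedron V i0) \<and>
         (carrier G \<noteq> {\<one>\<^bsub>G\<^esub>} \<longrightarrow>
           (\<exists>\<epsilon>>0. \<forall>y::real^'n. y $ i0 = 1 \<and> dist y (axis i0 1) < \<epsilon> \<longrightarrow> y \<in> S_polyhedron V i0))"
proof -
  have F: "(\<forall>x. x v* V = 0 \<longrightarrow> x = 0) \<and>
         (\<exists>w. (\<forall>j. w j > 0) \<and> (\<forall>x. x $ i0 = (\<Sum>j\<in>UNIV. w j * (x v* V) $ j))) \<and>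
         (\<forall>j. V $ i0 $ j = 1)"
    by (rule group.table_facts[OF assms])
  then obtain w where inj0: "\<And>x. x v* V = 0 \<Longrightarrow> x = 0" and wpos: "\<And>j. w j > 0"
    and key: "\<And>x. x $ i0 = (\<Sum>j\<in>UNIV. w j * (x v* V) $ j)" and row: "\<And>j. V $ i0 $ j = 1"
    by blast
  have S: "S_polyhedron V i0 = {x. (\<forall>j. 0 \<le> (x v* V) $ j) \<and> x $ i0 = 1}"
    unfolding S_polyhedron_def by simp
  show ?thesis unfolding S using simplex_lemma[OF inj0 wpos key] interior_lemma[OF row] by blast
qed


end
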